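(* Let $k\geq 1$, let $G$ be a connected graph, and let $e=(u,v)\in E(G)$ be a bridge of $G$. Suppose there is a maximum $k$-edge-colorable subgraph $H_k$ of $G$ with $e\in E(H_k)$. Let $G_1,G_2$ be the two components of $G-e$, and let $G_1e$, $G_2e$ be the graphs obtained from $G_1$, $G_2$ respectively by adding the edge $e$ together with its endpoint not in the component (so $E(G_ie)=E(G_i)\cup\{e\}$). Then $\nu_{k}(G)=\nu_{k}(G_{1}e)+\nu_{k}(G_{2}e)-1$.
   Context: Graphs are finite, without loops, possibly with multiple edges. $\nu_k(G)$ is the maximum number of edges of a $k$-edge-colorable subgraph of $G$; a maximum $k$-edge-colorable subgraph is one attaining $\nu_k(G)$ edges. A bridge is an edge whose removal increases the number of connected components. *)

theory Defs
  imports Main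
begin

text \<open>Parallel edges are distinct identifiers with the same endpoints.\<close>

definition multigraph :: "'v set \<Rightarrow> 'e set \<Rightarrow> ('e \<Rightarrow> 'v set) \<Rightarrow> bool" where
  "multigraph V E ends \<longleftrightarrow> finite V \<and> finite E \<and>
     (\<forall>e\<in>E. ends e \<subseteq> V \<and> card (ends e) = 2)"

definition k_edge_colorable :: "nat \<Rightarrow> ('e \<Rightarrow> 'v set) \<Rightarrow> 'e set \<Rightarrow> bool" where
  "k_edge_colorable k ends F \<longleftrightarrow>
     (\<exists>c :: 'e \<Rightarrow> nat. (\<forall>e\<in>F. c e < k) \<and>
        (\<forall>e\<in>F. \<forall>f\<in>F. e \<noteq> f \<and> ends e \<inter> ends f \<noteq> {} \<longrightarrow> c e \<noteq> c f))"

definition nu :: "nat \<Rightarrow> 'e set \<Rightarrow> ('e \<Rightarrow> 'v set) \<Rightarrow> nat" where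
  "nu k E ends = Max {card F | F. F \<subseteq> E \<and> k_edge_colorable k ends F}"

definition max_k_col_subgraph :: "nat \<Rightarrow> 'e set \<Rightarrow> ('e \<Rightarrow> 'v set) \<Rightarrow> 'e set \<Rightarrow> bool" where
  "max_k_col_subgraph k E ends H \<longleftrightarrow>
     H \<subseteq> E \<and> k_edge_colorable k ends H \<and> card H = nu k E ends"

definition adj_rel :: "'e set \<Rightarrow> ('e \<Rightarrow> 'v set) \<Rightarrow> ('v \<times> 'v) set" where
  "adj_rel E ends = {(x, y). \<exists>e\<in>E. ends e = {x, y}}"

definition components :: "'v set \<Rightarrow> 'e set \<Rightarrow> ('e \<Rightarrow> 'v set) \<Rightarrow> 'v set set" where
  "components V E ends = V // {(x, y). x \<in> V \<and> y \<in> V \<and> (x, y) \<in> (adj_rel E ends)\<^sup>*}"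

definition connected_graph :: "'v set \<Rightarrow> 'e set \<Rightarrow> ('e \<Rightarrow> 'v set) \<Rightarrow> bool" where
  "connected_graph V E ends \<longleftrightarrow> card (components V E ends) = 1"

definition bridge :: "'v set \<Rightarrow> 'e set \<Rightarrow> ('e \<Rightarrow> 'v set) \<Rightarrow> 'e \<Rightarrow> bool" where
  "bridge V E ends e \<longleftrightarrow> e \<in> E \<and>
     card (components V (E - {e}) ends) > card (components V E ends)"

definition comp_edges :: "'e set \<Rightarrow> ('e \<Rightarrow> 'v set) \<Rightarrow> 'e \<Rightarrow> 'v set \<Rightarrow> 'e set" where
  "comp_edges E ends e C = {f \<in> E - {e}. ends f \<subseteq> C}"

end

theory Submission
  imports Defs
begin

lemma nu_ge:
  assumes "finite E'" "F \<subseteq> E'" "k_edge_colorable k ends F"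
  shows "card F \<le> nu k E' ends"
proof -
  have "finite {card F | F. F \<subseteq> E' \<and> k_edge_colorable k ends F}"
    using assms(1) by simp
  then show ?thesis unfolding nu_def using assms by (intro Max_ge) auto
qed

lemma nu_ex:
  assumes "finite E'"
  shows "\<exists>F. F \<subseteq> E' \<and> k_edge_colorable k ends F \<and> card F = nu k E' ends"
proof -
  have "k_edge_colorable k ends {}" unfolding k_edge_colorable_def by auto
  then have ne: "{card F | F. F \<subseteq> E' \<and> k_edge_colorable k ends F} \<noteq> {}" by blast
  have "finite {card F | F. F \<subseteq> E' \<and> k_edge_colorable k ends F}"
    using assms(1) by simp
  from Max_in[OF this ne] show ?thesis unfolding nu_def by auto
qed

lemma col_subset:
  "k_edge_colorable k ends F \<Longrightarrow> G \<subseteq> F \<Longrightarrow> k_edge_colorable k ends G"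
  unfolding k_edge_colorable_def by blast

lemma recolor:
  assumes "\<forall>f\<in>F. c f < k" "\<forall>f\<in>F. \<forall>g\<in>F. f \<noteq> g \<and> ends f \<inter> ends g \<noteq> {} \<longrightarrow> c f \<noteq> c g"
    "e \<in> F" "j < k"
  shows "\<exists>c'. (\<forall>f\<in>F. c' f < k) \<and>
    (\<forall>f\<in>F. \<forall>g\<in>F. f \<noteq> g \<and> ends f \<inter> ends g \<noteq> {} \<longrightarrow> c' f \<noteq> c' g) \<and> c' e = j"
proof -
  define i where "i = c e"
  define c' where "c' x = (if c x = i then j else if c x = j then i else c x)" for x
  have "i < k" using assms i_def by auto
  have inj: "c' x = c' y \<Longrightarrow> c x = c y" for x y unfolding c'_def by (auto split: if_splits)
  have lt: "\<forall>f\<in>F. c' f < k" using assms(1,4) \<open>i < k\<close> unfolding c'_def by auto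
  have pr: "\<forall>f\<in>F. \<forall>g\<in>F. f \<noteq> g \<and> ends f \<inter> ends g \<noteq> {} \<longrightarrow> c' f \<noteq> c' g"
    using assms(2) inj by blast
  have "c' e = j" unfolding c'_def i_def by auto
  then show ?thesis using lt pr by blast
qed

lemma merge:
  assumes "A \<subseteq> E1 \<union> {e}" "B \<subseteq> E2 \<union> {e}" "e \<notin> E1" "e \<notin> E2"
    "\<forall>f\<in>E1. \<forall>g\<in>E2. ends f \<inter> ends g = {}"
    "k_edge_colorable k ends A" "k_edge_colorable k ends B" "e \<in> A \<longleftrightarrow> e \<in> B"
  shows "k_edge_colorable k ends (A \<union> B)"
proof -
  obtain cA where cA: "\<forall>f\<in>A. cA f < k"
    "\<forall>f\<in>A. \<forall>g\<in>A. f \<noteq> g \<and> ends f \<inter> ends g \<noteq> {} \<longrightarrow> cA f \<noteq> cA g"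
    using assms(6) unfolding k_edge_colorable_def by blast
  obtain cB where cB: "\<forall>f\<in>B. cB f < k"
    "\<forall>f\<in>B. \<forall>g\<in>B. f \<noteq> g \<and> ends f \<inter> ends g \<noteq> {} \<longrightarrow> cB f \<noteq> cB g"
    "e \<in> A \<longrightarrow> cB e = cA e"
  proof (cases "e \<in> A")
    case True
    obtain c0 where c0: "\<forall>f\<in>B. c0 f < k"
      "\<forall>f\<in>B. \<forall>g\<in>B. f \<noteq> g \<and> ends f \<inter> ends g \<noteq> {} \<longrightarrow> c0 f \<noteq> c0 g"
      using assms(7) unfolding k_edge_colorable_def by blast
    from recolor[OF c0, of e "cA e"] True assms(8) cA(1) that show ?thesis by blast
  next
    case False
    then show ?thesis using assms(7) that unfolding k_edge_colorable_def by blast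
  qed
  define c where "c x = (if x \<in> A then cA x else cB x)" for x
  have "\<forall>f\<in>A \<union> B. \<forall>g\<in>A \<union> B. f \<noteq> g \<and> ends f \<inter> ends g \<noteq> {} \<longrightarrow> c f \<noteq> c g"
  proof (intro ballI impI)
    fix f g assume f: "f \<in> A \<union> B" and g: "g \<in> A \<union> B" and fg: "f \<noteq> g \<and> ends f \<inter> ends g \<noteq> {}"
    show "c f \<noteq> c g"
    proof (cases "f \<in> A")
      case fA: True
      show ?thesis
      proof (cases "g \<in> A")
        case True then show ?thesis using fA fg cA unfolding c_def by auto
      next
        case gA: False
        then have gB: "g \<in> B" "g \<in> E2" "g \<noteq> e" using g assms(2,8) by auto
        show ?thesis
        proof (cases "f = e")
          case True
          have eB: "e \<in> B" using fA True assms(8) by simp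
          have "cB e \<noteq> cB g" using cB(2) eB gB(1) fg True by blast
          then show ?thesis using True fA gA cB(3) unfolding c_def by simp
        next
          case False
          then have "f \<in> E1" using fA assms(1) by auto
          then show ?thesis using gB fg assms(5) by blast
        qed
      qed
    next
      case fA: False
      then have fB: "f \<in> B" "f \<in> E2" "f \<noteq> e" using f assms(2,8) by auto
      show ?thesis
      proof (cases "g \<in> A")
        case gA: True
        show ?thesis
        proof (cases "g = e")
          case True
          have eB: "e \<in> B" using gA True assms(8) by simp
          have "cB f \<noteq> cB e" using cB(2) eB fB(1) fg True by blast
          then show ?thesis using True fA gA cB(3) unfolding c_def by simp
        next
          case False
          then have "g \<in> E1" using gA assms(1) by auto
          then show ?thesis using fB fg assms(5) by blast
        qed
      next
        case gA: False
        then show ?thesis using fA fB g fg cB unfolding c_def by auto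
      qed
    qed
  qed
  moreover have "\<forall>f\<in>A \<union> B. c f < k" using cA cB unfolding c_def by auto
  ultimately show ?thesis unfolding k_edge_colorable_def by blast
qed

lemma side:
  assumes fin: "finite E" and eH: "e \<in> H" and HE: "H \<subseteq> E" and colH: "k_edge_colorable k ends H"
    and cardH: "card H = nu k E ends"
    and split: "E - {e} = E1 \<union> E2" and dis: "E1 \<inter> E2 = {}" and e1: "e \<notin> E1" and e2: "e \<notin> E2"
    and sep: "\<forall>f\<in>E1. \<forall>g\<in>E2. ends f \<inter> ends g = {}"
  shows "nu k (E1 \<union> {e}) ends = card (H \<inter> E1) + 1"
proof -
  have eE: "e \<in> E" using eH HE by auto
  have sub: "E1 \<union> {e} \<subseteq> E" "E1 \<subseteq> E" "E2 \<subseteq> E" using split eE by blast+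
  have fin1: "finite (E1 \<union> {e})" "finite E1" "finite E2"
    using finite_subset[OF sub(1) fin] finite_subset[OF sub(2) fin] finite_subset[OF sub(3) fin] by auto
  have Hs: "H = insert e ((H \<inter> E1) \<union> (H \<inter> E2))" using eH HE split by auto
  have cH: "card H = card (H \<inter> E1) + card (H \<inter> E2) + 1"
  proof -
    have f1: "finite (H \<inter> E1)" "finite (H \<inter> E2)" using fin1 by auto
    have u: "card ((H \<inter> E1) \<union> (H \<inter> E2)) = card (H \<inter> E1) + card (H \<inter> E2)"
      by (rule card_Un_disjoint) (use f1 dis in auto)
    have "card (insert e ((H \<inter> E1) \<union> (H \<inter> E2))) = Suc (card ((H \<inter> E1) \<union> (H \<inter> E2)))"
      by (rule card_insert_disjoint) (use f1 e1 e2 in auto)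
    then show ?thesis using u Hs by simp
  qed
  have "card (insert e (H \<inter> E1)) \<le> nu k (E1 \<union> {e}) ends"
    by (rule nu_ge[OF fin1(1)]) (auto intro: col_subset[OF colH] simp: eH)
  then have lo: "card (H \<inter> E1) + 1 \<le> nu k (E1 \<union> {e}) ends" using fin1 e1 by simp
  obtain F1 where F1: "F1 \<subseteq> E1 \<union> {e}" "k_edge_colorable k ends F1" "card F1 = nu k (E1 \<union> {e}) ends"
    using nu_ex[OF fin1(1)] by blast
  have finF1: "finite F1" using F1(1) fin1(1) finite_subset by blast
  have colH2: "k_edge_colorable k ends (H \<inter> E2)" by (rule col_subset[OF colH]) auto
  have colH2e: "k_edge_colorable k ends (H \<inter> E2 \<union> {e})" by (rule col_subset[OF colH]) (auto simp: eH)
  have dF: "F1 \<inter> (H \<inter> E2) = {}" using F1(1) dis e2 by auto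
  have cU: "card (F1 \<union> (H \<inter> E2)) = card F1 + card (H \<inter> E2)"
    using finF1 fin1 dF by (auto intro: card_Un_disjoint)
  have colU: "k_edge_colorable k ends (F1 \<union> (H \<inter> E2))"
  proof (cases "e \<in> F1")
    case True
    have "k_edge_colorable k ends (F1 \<union> (H \<inter> E2 \<union> {e}))"
      by (rule merge[OF F1(1) _ e1 e2 sep F1(2) colH2e]) (use True in auto)
    then show ?thesis using True by (simp add: insert_absorb Un_insert_right)
  next
    case False
    show ?thesis
      by (rule merge[OF F1(1) _ e1 e2 sep F1(2) colH2]) (use False e2 in auto)
  qed
  have "F1 \<union> (H \<inter> E2) \<subseteq> E" using F1(1) split eE HE by auto
  from nu_ge[OF fin this colU] cU cardH cH F1(3) lo show ?thesis by linarith
qed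

theorem lemma7:
  fixes V :: "'v set" and E :: "'e set" and ends :: "'e \<Rightarrow> 'v set"
    and k :: nat and e :: 'e and u v :: 'v and H :: "'e set" and C1 C2 :: "'v set"
  assumes "k \<ge> 1"
    and "multigraph V E ends"
    and "connected_graph V E ends"
    and "bridge V E ends e"
    and "ends e = {u, v}"
    and "max_k_col_subgraph k E ends H"
    and "e \<in> H"
    and "components V (E - {e}) ends = {C1, C2}"
    and "C1 \<noteq> C2"
  shows "int (nu k E ends) =
           int (nu k (comp_edges E ends e C1 \<union> {e}) ends)
         + int (nu k (comp_edges E ends e C2 \<union> {e}) ends) - 1"
proof -
  define R where "R = {(x, y). x \<in> V \<and> y \<in> V \<and> (x, y) \<in> (adj_rel (E - {e}) ends)\<^sup>*}"
  have symA: "sym (adj_rel (E - {e}) ends)" unfolding adj_rel_def sym_def by (auto simp: insert_commute)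
  have eqR: "equiv V R"
  proof (rule equivI)
    show "refl_on V R" unfolding R_def refl_on_def by auto
    show "sym R" using sym_rtrancl[OF symA] unfolding R_def sym_def by auto
    show "trans R" unfolding R_def trans_def by (auto intro: rtrancl_trans)
    show "R \<subseteq> V \<times> V" unfolding R_def by auto
  qed
  have comps: "V // R = {C1, C2}" using assms(8) unfolding components_def R_def by simp
  have C1q: "C1 \<in> V // R" and C2q: "C2 \<in> V // R" using comps by auto
  have disC: "C1 \<inter> C2 = {}" using quotient_disj[OF eqR C1q C2q] assms(9) by auto
  have unV: "C1 \<union> C2 = V" using Union_quotient[OF eqR] comps by auto
  have mg: "finite E" "\<forall>f\<in>E. ends f \<subseteq> V \<and> card (ends f) = 2"
    using assms(2) unfolding multigraph_def by auto
  have inC: "ends f \<subseteq> C1 \<or> ends f \<subseteq> C2" if f: "f \<in> E - {e}" for f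
  proof -
    have c2: "card (ends f) = 2" and sv: "ends f \<subseteq> V" using mg f by auto
    then obtain x y where xy: "ends f = {x, y}" by (meson card_2_iff)
    have "(x, y) \<in> adj_rel (E - {e}) ends" using f xy unfolding adj_rel_def by auto
    then have xyR: "(x, y) \<in> R" using sv xy unfolding R_def by auto
    have "x \<in> C1 \<or> x \<in> C2" using sv xy unV by auto
    moreover have "y \<in> C" if "x \<in> C" "C \<in> V // R" for C
      using in_quotient_imp_closed[OF eqR that(2) that(1) xyR] .
    ultimately have "(x \<in> C1 \<and> y \<in> C1) \<or> (x \<in> C2 \<and> y \<in> C2)" using C1q C2q by blast
    then show ?thesis using xy by auto
  qed
  define E1 where "E1 = comp_edges E ends e C1"
  define E2 where "E2 = comp_edges E ends e C2"
  have nonempty: "ends f \<noteq> {}" if "f \<in> E" for f using mg that by fastforce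
  have split: "E - {e} = E1 \<union> E2" using inC unfolding E1_def E2_def comp_edges_def by blast
  have dis: "E1 \<inter> E2 = {}" using disC nonempty unfolding E1_def E2_def comp_edges_def by blast
  have e1: "e \<notin> E1" and e2: "e \<notin> E2" unfolding E1_def E2_def comp_edges_def by auto
  have sep: "\<forall>f\<in>E1. \<forall>g\<in>E2. ends f \<inter> ends g = {}" using disC unfolding E1_def E2_def comp_edges_def by blast
  have sep2: "\<forall>f\<in>E2. \<forall>g\<in>E1. ends f \<inter> ends g = {}" using sep by blast
  have H: "H \<subseteq> E" "k_edge_colorable k ends H" "card H = nu k E ends"
    using assms(6) unfolding max_k_col_subgraph_def by auto
  have s1: "nu k (E1 \<union> {e}) ends = card (H \<inter> E1) + 1"
    by (rule side[OF mg(1) assms(7) H split dis e1 e2 sep])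
  have s2: "nu k (E2 \<union> {e}) ends = card (H \<inter> E2) + 1"
    by (rule side[OF mg(1) assms(7) H _ _ e2 e1 sep2]) (use split dis in auto)
  have sub: "E1 \<subseteq> E" "E2 \<subseteq> E" using split by blast+
  have fin12: "finite E1" "finite E2"
    using finite_subset[OF sub(1) mg(1)] finite_subset[OF sub(2) mg(1)] by auto
  have Hs: "H = insert e ((H \<inter> E1) \<union> (H \<inter> E2))" using assms(7) H split by auto
  have cH: "card H = card (H \<inter> E1) + card (H \<inter> E2) + 1"
  proof -
    have f1: "finite (H \<inter> E1)" "finite (H \<inter> E2)" using fin12 by auto
    have u: "card ((H \<inter> E1) \<union> (H \<inter> E2)) = card (H \<inter> E1) + card (H \<inter> E2)"
      by (rule card_Un_disjoint) (use f1 dis in auto)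
    have "card (insert e ((H \<inter> E1) \<union> (H \<inter> E2))) = Suc (card ((H \<inter> E1) \<union> (H \<inter> E2)))"
      by (rule card_insert_disjoint) (use f1 e1 e2 in auto)
    then show ?thesis using u Hs by simp
  qed
  show ?thesis using s1 s2 cH H(3) unfolding E1_def E2_def by simp
qed

end
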